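(* $\displaystyle\mathfrak G^Q_{s_1s_2\cdots s_{n-1}}(z|\eta)=\sum_{j=0}^{n-1}(-1)^j(1-\eta_1)^jF^{(n-1)}_j.$
   Context: Fix $n\ge2$. With the convention $Q_n:=0$, for $0\le m\le i\le n$ put $F^{(i)}_m=\sum_{J\subset\{1,\dots,i\},|J|=m}\prod_{j\in J,\,j+1\notin J}(1-Q_j)\prod_{j\in J}z_j$. Let $s_i^{(\eta)}$ swap $\eta_i,\eta_{i+1}$, $x\ominus y=(x-y)/(1-y)$, and $D^Q_i=1+\frac{s_i^{(\eta)}-1}{\eta_{i+1}\ominus\eta_i}$ ($1\le i\le n-1$) acting on $\mathbb{Z}[Q_1,\dots,Q_{n-1}][z_1,\dots,z_n,\eta_1,\dots,\eta_n]$ (fixing $z,Q$). Let $\psi_i=\sum_{j=0}^i(-1)^j(1-\eta_{n-i})^jF^{(i)}_j$. The quantum double Grothendieck polynomials $\mathfrak G^Q_w(z|\eta)$, $w\in S_n$, are the unique family with $\mathfrak G^Q_{w_\circ}=\prod_{i=1}^{n-1}\psi_i$ and $D^Q_i\mathfrak G^Q_w=\mathfrak G^Q_{s_iw}$ if $s_iw<w$, $=\mathfrak G^Q_w$ if $s_iw>w$. *)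

theory Defs
  imports "HOL-Library.Poly_Mapping" "HOL-Combinatorics.Permutations"
begin

text \<open>Variables of the polynomial ring Z[Q_1,...][z_1,...,eta_1,...].\<close>
datatype var = Qv nat | Zv nat | Ev nat

type_synonym mpoly = "(var \<Rightarrow>\<^sub>0 nat) \<Rightarrow>\<^sub>0 int"

definition X :: "var \<Rightarrow> mpoly" where
  "X v = Poly_Mapping.single (Poly_Mapping.single v 1) 1"

abbreviation z :: "nat \<Rightarrow> mpoly" where "z j \<equiv> X (Zv j)"
abbreviation eta :: "nat \<Rightarrow> mpoly" where "eta j \<equiv> X (Ev j)"

text \<open>Quantum parameter with the convention Q_n = 0.\<close>
definition Qp :: "nat \<Rightarrow> nat \<Rightarrow> mpoly" where
  "Qp n j = (if j = n then 0 else X (Qv j))"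

definition rename :: "(var \<Rightarrow> var) \<Rightarrow> mpoly \<Rightarrow> mpoly" where
  "rename \<sigma> p = Poly_Mapping.map_key (Poly_Mapping.map_key \<sigma>) p"

definition s_eta :: "nat \<Rightarrow> mpoly \<Rightarrow> mpoly" where
  "s_eta i p = rename (transpose (Ev i) (Ev (Suc i))) p"

definition pdiv :: "mpoly \<Rightarrow> mpoly \<Rightarrow> mpoly" where
  "pdiv p q = (THE r. p = q * r)"

text \<open>D^Q_i = 1 + (s_i - 1)/(eta_(i+1) ominus eta_i), where x ominus y = (x-y)/(1-y),
  so 1/(eta_(i+1) ominus eta_i) = (1 - eta_i)/(eta_(i+1) - eta_i).\<close>
definition DQ :: "nat \<Rightarrow> mpoly \<Rightarrow> mpoly" where
  "DQ i f = f + pdiv ((1 - eta i) * (s_eta i f - f)) (eta (Suc i) - eta i)"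

definition F :: "nat \<Rightarrow> nat \<Rightarrow> nat \<Rightarrow> mpoly" where
  "F n i m = (\<Sum>J\<in>{J. J \<subseteq> {1..i} \<and> card J = m}.
      (\<Prod>j\<in>{j\<in>J. Suc j \<notin> J}. 1 - Qp n j) * (\<Prod>j\<in>J. z j))"

definition psi :: "nat \<Rightarrow> nat \<Rightarrow> mpoly" where
  "psi n i = (\<Sum>j=0..i. (-1)^j * (1 - eta (n - i))^j * F n i j)"

text \<open>Permutations of {1..n} as functions nat => nat; s_i as the transposition (i i+1);
  products are compositions.\<close>
definition sref :: "nat \<Rightarrow> nat \<Rightarrow> nat" where
  "sref i = transpose i (Suc i)"

definition inv_len :: "nat \<Rightarrow> (nat \<Rightarrow> nat) \<Rightarrow> nat" where
  "inv_len n w = card {(a, b). a \<in> {1..n} \<and> b \<in> {1..n} \<and> a < b \<and> w a > w b}"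

definition w0 :: "nat \<Rightarrow> nat \<Rightarrow> nat" where
  "w0 n = (\<lambda>i. if i \<in> {1..n} then n + 1 - i else i)"

definition coxeter :: "nat \<Rightarrow> nat \<Rightarrow> nat" where
  "coxeter n = foldr (\<lambda>i w. sref i \<circ> w) [1..<n] id"

definition is_QDG :: "nat \<Rightarrow> ((nat \<Rightarrow> nat) \<Rightarrow> mpoly) \<Rightarrow> bool" where
  "is_QDG n G \<longleftrightarrow>
     G (w0 n) = (\<Prod>i=1..n-1. psi n i) \<and>
     (\<forall>w i. (w permutes {1..n}) \<and> 1 \<le> i \<and> i \<le> n - 1 \<longrightarrow>
        DQ i (G w) = (if inv_len n (sref i \<circ> w) < inv_len n w then G (sref i \<circ> w) else G w))"

end

theory Submission
  imports Defs
begin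

fun enc_var :: "var \<Rightarrow> nat" where
  "enc_var (Qv k) = 3*k" | "enc_var (Zv k) = 3*k+1" | "enc_var (Ev k) = 3*k+2"

lemma enc_var_inj: "enc_var a = enc_var b \<Longrightarrow> a = b"
  by (cases a; cases b; simp; presburger)

instantiation var :: linorder
begin
definition less_eq_var_def: "less_eq_var a b = (enc_var a \<le> enc_var b)"
definition less_var_def: "less_var a b = (enc_var a < enc_var b)"
instance
  by standard (auto simp: less_eq_var_def less_var_def intro: enc_var_inj)
end

lemma "(p::mpoly) * q = 0 \<Longrightarrow> p = 0 \<or> q = 0" by simp

lemma pm_induct:
  assumes "P 0" "\<And>f a b. P f \<Longrightarrow> P (f + Poly_Mapping.single a b)"
  shows "P f"
proof (induction f rule: Poly_Mapping.update_induct)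
  case const then show ?case using assms(1) .
next
  case (update f a b)
  have "Poly_Mapping.update a b f = f + Poly_Mapping.single a b"
    using update(1)
    by (intro Poly_Mapping.poly_mapping_eqI) (auto simp: Poly_Mapping.lookup_update Poly_Mapping.lookup_add Poly_Mapping.lookup_single in_keys_iff when_def)
  then show ?case using assms(2) update by simp
qed


context
  fixes \<sigma> :: "var \<Rightarrow> var"
  assumes invol: "\<And>x. \<sigma> (\<sigma> x) = x"
begin

lemma inj_sig: "inj \<sigma>" by (metis injI invol)

lemma mk_invol: "Poly_Mapping.map_key \<sigma> (Poly_Mapping.map_key \<sigma> m) = m"
proof -
  have "Poly_Mapping.map_key \<sigma> (Poly_Mapping.map_key \<sigma> m) = Poly_Mapping.map_key (\<sigma> \<circ> \<sigma>) m"
    by (rule Poly_Mapping.map_key_compose[OF inj_sig inj_sig])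
  also have "\<sigma> \<circ> \<sigma> = (\<lambda>x. x)" using invol by (simp add: fun_eq_iff)
  finally show ?thesis by (simp add: Poly_Mapping.map_key_id)
qed

lemma inj_mk: "inj (Poly_Mapping.map_key \<sigma>)"
  by (metis injI mk_invol)

lemma mk_add: "Poly_Mapping.map_key \<sigma> (a + b) = Poly_Mapping.map_key \<sigma> a + Poly_Mapping.map_key \<sigma> b"
  by (rule Poly_Mapping.map_key_plus[OF inj_sig])

lemma mk_zero: "Poly_Mapping.map_key \<sigma> (0::var \<Rightarrow>\<^sub>0 nat) = 0"
  by (rule Poly_Mapping.map_key_zero[OF inj_sig])

lemma rename_add: "rename \<sigma> (p + q) = rename \<sigma> p + rename \<sigma> q"
  unfolding rename_def by (rule Poly_Mapping.map_key_plus[OF inj_mk])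

lemma rename_zero[simp]: "rename \<sigma> 0 = 0"
  unfolding rename_def by (rule Poly_Mapping.map_key_zero[OF inj_mk])

lemma rename_single: "rename \<sigma> (Poly_Mapping.single k v) = Poly_Mapping.single (Poly_Mapping.map_key \<sigma> k) v"
proof -
  have "rename \<sigma> (Poly_Mapping.single (Poly_Mapping.map_key \<sigma> (Poly_Mapping.map_key \<sigma> k)) v)
     = Poly_Mapping.single (Poly_Mapping.map_key \<sigma> k) v"
    unfolding rename_def by (rule Poly_Mapping.map_key_single[OF inj_mk])
  then show ?thesis by (simp add: mk_invol)
qed

lemma rename_mult_single: "rename \<sigma> (Poly_Mapping.single a c * Poly_Mapping.single b d)
   = rename \<sigma> (Poly_Mapping.single a c) * rename \<sigma> (Poly_Mapping.single b d)"
  by (simp add: Poly_Mapping.mult_single rename_single mk_add)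

lemma rename_mult: "rename \<sigma> (p * q) = rename \<sigma> p * rename \<sigma> q"
proof (induction p rule: pm_induct)
  case 1 then show ?case by simp
next
  case (2 f a b)
  have "rename \<sigma> (Poly_Mapping.single a b * q) = rename \<sigma> (Poly_Mapping.single a b) * rename \<sigma> q"
  proof (induction q rule: pm_induct)
    case 1 then show ?case by simp
  next
    case (2 g c d)
    then show ?case by (simp add: distrib_left rename_add rename_mult_single)
  qed
  with 2 show ?case by (simp add: distrib_right rename_add)
qed

lemma rename_one[simp]: "rename \<sigma> 1 = 1"
proof -
  have "rename \<sigma> (Poly_Mapping.single 0 1) = (Poly_Mapping.single 0 1 :: mpoly)"
    by (simp only: rename_single mk_zero)
  then show ?thesis by (simp only: Poly_Mapping.single_one)
qed

lemma rename_uminus: "rename \<sigma> (- p) = - rename \<sigma> p"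
  using rename_add[of p "-p"] by (simp add: eq_neg_iff_add_eq_0 add.commute)

lemma rename_diff: "rename \<sigma> (p - q) = rename \<sigma> p - rename \<sigma> q"
  using rename_add[of p "-q"] rename_uminus[of q] by simp

lemma rename_sum: "rename \<sigma> (sum f A) = sum (\<lambda>x. rename \<sigma> (f x)) A"
  by (induction A rule: infinite_finite_induct) (auto simp: rename_add)

lemma rename_prod: "rename \<sigma> (prod f A) = prod (\<lambda>x. rename \<sigma> (f x)) A"
  by (induction A rule: infinite_finite_induct) (auto simp: rename_mult)

lemma rename_power: "rename \<sigma> (p ^ k) = rename \<sigma> p ^ k"
  by (induction k) (auto simp: rename_mult)

lemma rename_X: "rename \<sigma> (X v) = X (\<sigma> v)"
proof -
  have "Poly_Mapping.map_key \<sigma> (Poly_Mapping.single (\<sigma> (\<sigma> v)) (1::nat)) = Poly_Mapping.single (\<sigma> v) 1"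
    by (rule Poly_Mapping.map_key_single[OF inj_sig])
  then show ?thesis unfolding X_def by (simp add: rename_single invol)
qed

lemma rename_neg_one_power: "rename \<sigma> ((-1) ^ k) = (-1) ^ k"
  by (simp add: rename_power rename_uminus)

end

abbreviation sg :: "nat \<Rightarrow> var \<Rightarrow> var" where "sg i \<equiv> Transposition.transpose (Ev i) (Ev (Suc i))"

lemma sg_invol: "sg i (sg i x) = x" by simp

lemma s_add: "s_eta i (p + q) = s_eta i p + s_eta i q"
  unfolding s_eta_def by (rule rename_add[OF sg_invol])
lemma s_mult: "s_eta i (p * q) = s_eta i p * s_eta i q"
  unfolding s_eta_def by (rule rename_mult[OF sg_invol])
lemma s_diff: "s_eta i (p - q) = s_eta i p - s_eta i q"
  unfolding s_eta_def by (rule rename_diff[OF sg_invol])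
lemma s_uminus: "s_eta i (- p) = - s_eta i p"
  unfolding s_eta_def by (rule rename_uminus[OF sg_invol])
lemma s_sum: "s_eta i (sum f A) = sum (\<lambda>x. s_eta i (f x)) A"
  unfolding s_eta_def by (rule rename_sum[OF sg_invol])
lemma s_prod: "s_eta i (prod f A) = prod (\<lambda>x. s_eta i (f x)) A"
  unfolding s_eta_def by (rule rename_prod[OF sg_invol])
lemma s_power: "s_eta i (p ^ k) = s_eta i p ^ k"
  unfolding s_eta_def by (rule rename_power[OF sg_invol])
lemma s_X: "s_eta i (X v) = X (sg i v)"
  unfolding s_eta_def by (rule rename_X[OF sg_invol])
lemma s_one: "s_eta i 1 = 1"
  unfolding s_eta_def by (rule rename_one[OF sg_invol])
lemma s_zero: "s_eta i 0 = 0"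
  unfolding s_eta_def by (rule rename_zero[OF sg_invol])

lemma s_negpow: "s_eta i ((-1) ^ k) = (-1) ^ k"
  by (simp add: s_power s_uminus s_one)

lemma s_eta_i: "s_eta i (eta i) = eta (Suc i)" by (simp add: s_X)
lemma s_eta_Si: "s_eta i (eta (Suc i)) = eta i" by (simp add: s_X)
lemma s_eta_other: "l \<noteq> i \<Longrightarrow> l \<noteq> Suc i \<Longrightarrow> s_eta i (eta l) = eta l"
  by (simp add: s_X)
lemma s_z: "s_eta i (z l) = z l" by (simp add: s_X)
lemma s_Qp: "s_eta i (Qp n l) = Qp n l" by (simp add: s_X Qp_def s_zero)

lemma s_F: "s_eta i (F n a b) = F n a b"
  unfolding F_def by (simp add: s_sum s_mult s_prod s_diff s_one s_Qp s_z)

lemma single_key_inj: "Poly_Mapping.single a v = Poly_Mapping.single b v \<Longrightarrow> v \<noteq> 0 \<Longrightarrow> a = b"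
proof -
  assume h: "Poly_Mapping.single a v = Poly_Mapping.single b v" and v: "v \<noteq> 0"
  have "Poly_Mapping.lookup (Poly_Mapping.single a v) a = Poly_Mapping.lookup (Poly_Mapping.single b v) a"
    using h by simp
  then show "a = b" using v by (simp add: Poly_Mapping.lookup_single when_def split: if_splits)
qed

lemma X_inj: "X a = X b \<Longrightarrow> a = b"
  unfolding X_def
  by (drule single_key_inj) (auto dest: single_key_inj)

lemma DQ_char:
  assumes "(1 - eta i) * (s_eta i f - f) = (eta (Suc i) - eta i) * r"
  shows "DQ i f = f + r"
proof -
  have q: "eta (Suc i) - eta i \<noteq> 0" using X_inj[of "Ev (Suc i)" "Ev i"] by auto
  have "pdiv ((1 - eta i) * (s_eta i f - f)) (eta (Suc i) - eta i) = r"
    unfolding pdiv_def assms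
    by (rule the_equality) (use q in auto)
  then show ?thesis unfolding DQ_def by simp
qed

fun hh :: "nat \<Rightarrow> 'a::comm_ring_1 list \<Rightarrow> 'a" where
  "hh 0 xs = 1"
| "hh (Suc r) [] = 0"
| "hh (Suc r) (x # xs) = x * hh r (x # xs) + hh (Suc r) xs"

lemma hh_diff: "hh (Suc r) (b # S) - hh (Suc r) (a # S) = (b - a) * hh r (b # a # S)"
proof (induction r)
  case 0 then show ?case by simp
next
  case (Suc r)
  have e: "hh (Suc r) (b # S) = hh (Suc r) (a # S) + (b - a) * hh r (b # a # S)"
    using Suc by (simp add: algebra_simps)
  have "hh (Suc (Suc r)) (b # S) - hh (Suc (Suc r)) (a # S)
      = b * hh (Suc r) (b # S) - a * hh (Suc r) (a # S)" by simp
  also have "\<dots> = b * (hh (Suc r) (a # S) + (b - a) * hh r (b # a # S)) - a * hh (Suc r) (a # S)"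
    by (simp only: e)
  also have "\<dots> = (b - a) * (b * hh r (b # a # S) + hh (Suc r) (a # S))"
    by (simp add: algebra_simps)
  also have "\<dots> = (b - a) * hh (Suc r) (b # a # S)" by simp
  finally show ?case .
qed

lemma hh_single: "hh r [x] = x ^ r"
  by (induction r) auto

lemma s_hh: "s_eta i (hh r xs) = hh r (map (s_eta i) xs)"
  by (induction r xs rule: hh.induct) (auto simp: s_one s_zero s_add s_mult)

definition y :: "nat \<Rightarrow> mpoly" where "y j = 1 - eta j"

lemma s_y_i: "s_eta i (y i) = y (Suc i)" by (simp add: y_def s_diff s_one s_eta_i)
lemma s_y_Si: "s_eta i (y (Suc i)) = y i" by (simp add: y_def s_diff s_one s_eta_Si)
lemma s_y_other: "l \<noteq> i \<Longrightarrow> l \<noteq> Suc i \<Longrightarrow> s_eta i (y l) = y l"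
  by (simp add: y_def s_diff s_one s_eta_other)

lemma s_psi: "n - a \<noteq> i \<Longrightarrow> n - a \<noteq> Suc i \<Longrightarrow> s_eta i (psi n a) = psi n a"
  unfolding psi_def
  by (simp add: s_sum s_mult s_power s_diff s_one s_eta_other s_F s_uminus)

definition RR :: "nat \<Rightarrow> nat \<Rightarrow> nat \<Rightarrow> mpoly" where
  "RR m j k = (if k = 0 then 1 else if j - m \<le> k - 1 then
      (-1) ^ (j - m) * (\<Prod>l=m..j. y l) * hh (k - 1 - (j - m)) (map y (rev [m..<Suc j])) else 0)"

lemma gen_id0:
  fixes a b c Ha H' :: "'a::comm_ring_1"
  shows "a * (c * b * (Ha + (b - a) * H') - c * a * Ha) = (a - b) * (- (c * a * b * H') - c * a * Ha)"
  by (simp add: algebra_simps)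

lemma gen_id:
  fixes a b c Ha Hb H' :: "'a::comm_ring_1"
  assumes "Hb - Ha = (b - a) * H'"
  shows "a * (c * b * Hb - c * a * Ha) = (a - b) * (- (c * a * b * H') - c * a * Ha)"
proof -
  have "Hb = Ha + (b - a) * H'" using assms by (simp add: algebra_simps)
  then show ?thesis by (simp only: gen_id0)
qed

lemma RR_m: "RR m m k = y m ^ k"
  by (cases k) (auto simp: RR_def hh_single power_Suc)

lemma RR_step:
  assumes "m \<le> j"
  shows "y j * (s_eta j (RR m j k) - RR m j k) = (y j - y (Suc j)) * (RR m (Suc j) k - RR m j k)"
proof (cases "k = 0")
  case True then show ?thesis by (simp add: RR_def s_one)
next
  case k: False
  show ?thesis
  proof (cases "j - m \<le> k - 1")
    case False
    then have "\<not> Suc j - m \<le> k - 1" by auto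
    with False k show ?thesis by (simp add: RR_def s_zero)
  next
    case True
    define r where "r = k - 1 - (j - m)"
    define L where "L = map y (rev [m..<j])"
    define K0 where "K0 = (\<Prod>l\<in>{m..<j}. y l)"
    define c where "c = (-1) ^ (j - m) * K0"
    have listj: "map y (rev [m..<Suc j]) = y j # L"
      using assms by (simp add: L_def)
    have prodj: "(\<Prod>l=m..j. y l) = K0 * y j"
      using assms unfolding K0_def
      by (metis atLeastLessThanSuc_atLeastAtMost prod.atLeastLessThan_Suc mult.commute)
    have "RR m j k = (-1) ^ (j - m) * (\<Prod>l=m..j. y l) * hh r (map y (rev [m..<Suc j]))"
      using k True unfolding RR_def r_def by simp
    then have Rj: "RR m j k = c * y j * hh r (y j # L)"
      unfolding listj prodj c_def by (simp add: mult.assoc)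
    have sK0: "s_eta j K0 = K0"
      unfolding K0_def by (auto simp: s_prod intro!: prod.cong s_y_other)
    have sL: "map (s_eta j) L = L"
      unfolding L_def by (auto simp: s_y_other)
    have sc: "s_eta j c = c" by (simp add: c_def s_mult s_negpow sK0)
    have sRj: "s_eta j (c * y j * hh r (y j # L)) = c * y (Suc j) * hh r (y (Suc j) # L)"
      by (simp add: s_mult sc s_y_i s_hh sL)
    show ?thesis
    proof (cases r)
      case 0
      then have "\<not> Suc j - m \<le> k - 1" using True r_def assms by auto
      then have R0: "RR m (Suc j) k = 0" using k by (simp add: RR_def)
      show ?thesis unfolding R0 Rj sRj by (simp add: 0 algebra_simps)
    next
      case (Suc r')
      have le: "Suc j - m \<le> k - 1" using Suc r_def True assms by auto
      have r': "k - 1 - (Suc j - m) = r'" using Suc r_def assms by auto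
      have listSj: "map y (rev [m..<Suc (Suc j)]) = y (Suc j) # y j # L"
        using assms by (simp add: L_def)
      have prodSj: "(\<Prod>l=m..Suc j. y l) = K0 * y j * y (Suc j)"
        using assms prodj by (simp add: prod.nat_ivl_Suc')
      have sgn: "(-1) ^ (Suc j - m) = - ((-1) ^ (j - m) :: mpoly)"
        using assms by (simp add: Suc_diff_le)
      have "RR m (Suc j) k = (-1) ^ (Suc j - m) * (\<Prod>l=m..Suc j. y l) * hh r' (map y (rev [m..<Suc (Suc j)]))"
        using k le unfolding RR_def r' by simp
      then have RSj: "RR m (Suc j) k = - (c * y j * y (Suc j) * hh r' (y (Suc j) # y j # L))"
        unfolding listSj prodSj sgn c_def by (simp add: algebra_simps)
      show ?thesis
        unfolding RSj Rj sRj unfolding Suc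
        by (rule gen_id[OF hh_diff])
    qed
  qed
qed

definition EE :: "nat \<Rightarrow> nat \<Rightarrow> nat \<Rightarrow> mpoly" where
  "EE n m j = (\<Prod>i=n-m+1..n-1. psi n i) * (\<Sum>k=0..n-m. (-1)^k * F n (n-m) k * RR m j k)"

lemma EE_step:
  assumes "1 \<le> m" "m \<le> j" "j < n"
  shows "DQ j (EE n m j) = EE n m (Suc j)"
proof -
  define C where "C = (\<Prod>i=n-m+1..n-1. psi n i)"
  define c where "c k = (-1)^k * F n (n-m) k" for k
  have EEe: "EE n m j' = C * (\<Sum>k=0..n-m. c k * RR m j' k)" for j'
    by (simp add: EE_def C_def c_def)
  have sC: "s_eta j C = C"
    unfolding C_def s_prod using assms by (auto intro!: prod.cong s_psi)
  have sc: "s_eta j (c k) = c k" for k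
    by (simp add: c_def s_mult s_negpow s_F)
  have sEE: "s_eta j (EE n m j) = C * (\<Sum>k=0..n-m. c k * s_eta j (RR m j k))"
    by (simp add: EEe s_mult sC s_sum sc)
  have "y j * (s_eta j (EE n m j) - EE n m j)
      = C * (\<Sum>k=0..n-m. c k * (y j * (s_eta j (RR m j k) - RR m j k)))"
    unfolding sEE unfolding EEe
    by (simp add: sum_distrib_left algebra_simps sum_subtractf[symmetric])
  also have "\<dots> = C * (\<Sum>k=0..n-m. c k * ((y j - y (Suc j)) * (RR m (Suc j) k - RR m j k)))"
    using RR_step[OF assms(2)] by simp
  also have "\<dots> = (y j - y (Suc j)) * (EE n m (Suc j) - EE n m j)"
    unfolding EEe
    by (simp add: sum_distrib_left algebra_simps sum_subtractf[symmetric])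
  finally have key: "y j * (s_eta j (EE n m j) - EE n m j) = (y j - y (Suc j)) * (EE n m (Suc j) - EE n m j)" .
  have "(1 - eta j) * (s_eta j (EE n m j) - EE n m j) = (eta (Suc j) - eta j) * (EE n m (Suc j) - EE n m j)"
    using key by (simp add: y_def)
  then show ?thesis by (subst DQ_char) auto
qed



definition PP :: "nat \<Rightarrow> nat \<Rightarrow> nat \<Rightarrow> nat \<Rightarrow> nat" where
  "PP n m j = (\<lambda>x. if 1 \<le> x \<and> x \<le> n - m then (if x + m \<le> j then x + m - 1 else x + m)
     else if x = n - m + 1 then j else if n - m + 1 < x \<and> x \<le> n then n + 1 - x else x)"

lemma PP_step:
  assumes "1 \<le> m" "m \<le> j" "j < n"
  shows "PP n m (Suc j) = sref j \<circ> PP n m j"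
proof
  fix x
  have sr: "sref j v = (if v = j then Suc j else if v = Suc j then j else v)" for v
    by (simp add: sref_def Transposition.transpose_def)
  consider (a) "1 \<le> x" "x \<le> n - m" "x + m \<le> j" | (b) "1 \<le> x" "x \<le> n - m" "x + m = Suc j"
    | (c) "1 \<le> x" "x \<le> n - m" "x + m > Suc j" | (d) "x = n - m + 1"
    | (e) "n - m + 1 < x" "x \<le> n" | (f) "x = 0 \<or> x > n" by linarith
  then show "PP n m (Suc j) x = (sref j \<circ> PP n m j) x"
  proof cases
    case a then show ?thesis using assms unfolding PP_def o_def sr by auto
  next
    case b then show ?thesis using assms unfolding PP_def o_def sr by auto
  next
    case c then show ?thesis using assms unfolding PP_def o_def sr by auto
  next
    case d then show ?thesis using assms unfolding PP_def o_def sr by auto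
  next
    case e then show ?thesis using assms unfolding PP_def o_def sr by auto
  next
    case f then show ?thesis using assms unfolding PP_def o_def sr by auto
  qed
qed

lemma PP_start: "2 \<le> n \<Longrightarrow> PP n (n-1) (n-1) = w0 n"
proof
  fix x assume n: "2 \<le> n"
  consider "x = 0" | "x = 1" | "x = 2" | "2 < x" "x \<le> n" | "x > n" by linarith
  then show "PP n (n-1) (n-1) x = w0 n x"
    by cases (use n in \<open>simp_all add: PP_def w0_def\<close>)
qed

lemma PP_trans: "2 \<le> m \<Longrightarrow> m \<le> n - 1 \<Longrightarrow> PP n m n = PP n (m-1) (m-1)"
proof
  fix x assume m: "2 \<le> m" "m \<le> n - 1"
  consider "x = 0" | "1 \<le> x" "x \<le> n - m" | "x = n - m + 1" | "x = n - m + 2"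
    | "n - m + 2 < x" "x \<le> n" | "x > n" by linarith
  then show "PP n m n x = PP n (m-1) (m-1) x"
    by cases (use m in \<open>auto simp: PP_def\<close>)
qed

lemma foldr_sref:
  "foldr (\<lambda>i w. sref i \<circ> w) [a..<a+d] id x = (if a \<le> x \<and> x < a + d then x + 1 else if x = a + d then a else x)"
proof (induction d arbitrary: a)
  case 0 then show ?case by simp
next
  case (Suc d)
  have "[a..<a + Suc d] = a # [Suc a..<Suc a + d]" by (simp add: upt_conv_Cons)
  then show ?case using Suc[of "Suc a"]
    by (auto simp: sref_def Transposition.transpose_def)
qed

lemma coxeter_eq: "2 \<le> n \<Longrightarrow> PP n 1 1 = coxeter n"
proof -
  assume n: "2 \<le> n"
  have "coxeter n x = (if 1 \<le> x \<and> x < n then x + 1 else if x = n then 1 else x)" for x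
    using foldr_sref[of 1 "n-1" x] n unfolding coxeter_def by simp
  moreover have "PP n 1 1 x = (if 1 \<le> x \<and> x < n then x + 1 else if x = n then 1 else x)" for x
  proof -
    consider "x = 0" | "1 \<le> x" "x < n" | "x = n" | "x > n" by linarith
    then show ?thesis by cases (use n in \<open>auto simp: PP_def\<close>)
  qed
  ultimately show ?thesis by (simp add: fun_eq_iff)
qed

lemma w0_permutes: "w0 n permutes {1..n}"
proof (rule bij_imp_permutes)
  show "bij_betw (w0 n) {1..n} {1..n}"
    by (rule bij_betw_byWitness[where f'="w0 n"]) (auto simp: w0_def split: if_splits)
  show "x \<notin> {1..n} \<Longrightarrow> w0 n x = x" for x by (auto simp: w0_def)
qed

lemma inv_desc:
  assumes inj: "inj_on w {1..n}" and pq: "p < q" "p \<in> {1..n}" "q \<in> {1..n}"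
    and wp: "w p = Suc i" and wq: "w q = i"
  shows "inv_len n (sref i \<circ> w) < inv_len n w"
proof -
  define A where "A = {(a, b). a \<in> {1..n} \<and> b \<in> {1..n} \<and> a < b \<and> w a > w b}"
  define B where "B = {(a, b). a \<in> {1..n} \<and> b \<in> {1..n} \<and> a < b \<and> (sref i \<circ> w) a > (sref i \<circ> w) b}"
  have fin: "finite A" unfolding A_def
    by (rule finite_subset[of _ "{1..n} \<times> {1..n}"]) auto
  have "B \<subseteq> A - {(p, q)}"
  proof
    fix ab assume "ab \<in> B"
    then obtain a b where ab: "ab = (a, b)" "a \<in> {1..n}" "b \<in> {1..n}" "a < b"
      "sref i (w a) > sref i (w b)" unfolding B_def by auto
    have "w a > w b"
    proof (rule ccontr)
      assume "\<not> w a > w b"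
      with ab(5) have "w a = i \<and> w b = Suc i"
        by (auto simp: sref_def Transposition.transpose_def split: if_splits)
      then have "w a = w q" "w b = w p" using wp wq by auto
      then have "a = q" "b = p" using inj ab(2,3) pq by (auto dest: inj_onD)
      with ab(4) pq show False by simp
    qed
    moreover have "(a, b) \<noteq> (p, q)"
      using ab(5) wp wq by (auto simp: sref_def)
    ultimately show "ab \<in> A - {(p, q)}" using ab unfolding A_def by auto
  qed
  moreover have "(p, q) \<in> A" using pq wp wq unfolding A_def by auto
  ultimately have "B \<subset> A" by auto
  then have "card B < card A" by (rule psubset_card_mono[OF fin])
  then show ?thesis unfolding inv_len_def A_def B_def by simp
qed

lemma PP_desc:
  assumes "1 \<le> m" "m \<le> j" "j < n" "PP n m j permutes {1..n}"
  shows "inv_len n (sref j \<circ> PP n m j) < inv_len n (PP n m j)"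
proof (rule inv_desc[where p="Suc j - m" and q="n - m + 1"])
  show "inj_on (PP n m j) {1..n}" using assms(4) by (rule permutes_inj_on)
next
  show "PP n m j (Suc j - m) = Suc j" using assms by (auto simp: PP_def)
next
  show "PP n m j (n - m + 1) = j" using assms by (simp add: PP_def)
qed (use assms in auto)


lemma F0: "F n i 0 = 1"
proof -
  have "{J. J \<subseteq> {1..i} \<and> card J = 0} = {{}}"
    by (auto dest: finite_subset[OF _ finite_atLeastAtMost])
  then show ?thesis unfolding F_def by simp
qed

lemma psi_eq: "psi n i = (\<Sum>k=0..i. (-1)^k * F n i k * y (n-i) ^ k)"
  unfolding psi_def y_def by (simp add: mult_ac)

lemma EE_mm: "1 \<le> m \<Longrightarrow> m \<le> n \<Longrightarrow> EE n m m = (\<Prod>i=n-m+1..n-1. psi n i) * psi n (n-m)"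
  unfolding EE_def by (simp add: RR_m psi_eq)

lemma EE_end: "m \<le> n \<Longrightarrow> EE n m n = (\<Prod>i=n-m+1..n-1. psi n i)"
proof -
  assume m: "m \<le> n"
  have "(\<Sum>k=0..n-m. (-1)^k * F n (n-m) k * RR m n k) = (\<Sum>k=0..n-m. (if k = 0 then 1 else 0))"
  proof (rule sum.cong)
    fix k assume "k \<in> {0..n-m}"
    then show "(-1)^k * F n (n-m) k * RR m n k = (if k = 0 then 1 else 0)"
      using m by (auto simp: RR_def F0)
  qed simp
  also have "\<dots> = 1" by simp
  finally show ?thesis unfolding EE_def by simp
qed

lemma EE_trans: "2 \<le> m \<Longrightarrow> m \<le> n - 1 \<Longrightarrow> EE n m n = EE n (m-1) (m-1)"
proof -
  assume m: "2 \<le> m" "m \<le> n - 1"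
  have e1: "n - (m - 1) + 1 = Suc (n - m + 1)" using m by simp
  have e2: "n - (m - 1) = n - m + 1" using m by simp
  have "(\<Prod>i=n-m+1..n-1. psi n i) = psi n (n-m+1) * (\<Prod>i=Suc (n-m+1)..n-1. psi n i)"
    using m by (intro prod.atLeast_Suc_atMost) simp
  moreover have "Suc n - m = Suc (n - m)" using m by simp
  ultimately show ?thesis using m by (simp add: EE_end EE_mm e1 e2 mult.commute)
qed

lemma EE_start: "2 \<le> n \<Longrightarrow> EE n (n-1) (n-1) = (\<Prod>i=1..n-1. psi n i)"
proof -
  assume n: "2 \<le> n"
  have "(\<Prod>i=1..n-1. psi n i) = psi n 1 * (\<Prod>i=Suc 1..n-1. psi n i)"
    using n by (intro prod.atLeast_Suc_atMost) simp
  moreover have "n - (n - 1) + 1 = Suc 1" "n - (n - 1) = 1" using n by auto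
  ultimately show ?thesis using n by (simp add: EE_mm mult.commute)
qed

lemma EE_final: "2 \<le> n \<Longrightarrow> EE n 1 1 = (\<Sum>j=0..n-1. (-1)^j * (1 - eta 1)^j * F n (n-1) j)"
proof -
  assume n: "2 \<le> n"
  have "n - 1 + 1 = n" "n - (n - 1) = 1" using n by auto
  then show ?thesis using n by (simp add: EE_mm psi_def)
qed

theorem corollary5p3:
  fixes n :: nat and G :: "(nat \<Rightarrow> nat) \<Rightarrow> mpoly"
  assumes "n \<ge> 2" and "is_QDG n G"
  shows "G (coxeter n) = (\<Sum>j=0..n-1. (-1)^j * (1 - eta 1)^j * F n (n-1) j)"
proof -
  have n: "2 \<le> n" using assms(1) .
  have G0: "G (w0 n) = (\<Prod>i=1..n-1. psi n i)" using assms(2) unfolding is_QDG_def by blast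
  have stepG: "\<And>w i. w permutes {1..n} \<Longrightarrow> 1 \<le> i \<Longrightarrow> i \<le> n - 1 \<Longrightarrow>
      DQ i (G w) = (if inv_len n (sref i \<circ> w) < inv_len n w then G (sref i \<circ> w) else G w)"
    using assms(2) unfolding is_QDG_def by blast
  have inner: "PP n m (m + d) permutes {1..n} \<and> G (PP n m (m + d)) = EE n m (m + d)"
    if m: "1 \<le> m" "m \<le> n - 1" and st: "PP n m m permutes {1..n}" "G (PP n m m) = EE n m m"
      and d: "m + d \<le> n" for m d
    using d
  proof (induction d)
    case 0 then show ?case using st by simp
  next
    case (Suc d)
    define j where "j = m + d"
    have j: "m \<le> j" "j < n" using Suc.prems j_def by auto
    have IH: "PP n m j permutes {1..n}" "G (PP n m j) = EE n m j"
      using Suc.IH Suc.prems j_def by auto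
    have eq: "PP n m (Suc j) = sref j \<circ> PP n m j" using PP_step[OF m(1) j] .
    have perm: "PP n m (Suc j) permutes {1..n}"
      unfolding eq sref_def
      by (rule permutes_compose[OF IH(1) permutes_swap_id]) (use j m in auto)
    have "DQ j (G (PP n m j)) = G (sref j \<circ> PP n m j)"
      using stepG[OF IH(1), of j] PP_desc[OF m(1) j IH(1)] j m by simp
    then have "G (PP n m (Suc j)) = EE n m (Suc j)"
      using IH(2) EE_step[OF m(1) j] eq by simp
    then show ?case using perm j_def by simp
  qed
  have outer: "t \<le> n - 2 \<Longrightarrow> PP n (n-1-t) (n-1-t) permutes {1..n} \<and> G (PP n (n-1-t) (n-1-t)) = EE n (n-1-t) (n-1-t)" for t
  proof (induction t)
    case 0 then show ?case using n PP_start w0_permutes G0 EE_start by simp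
  next
    case (Suc t)
    define m where "m = n - 1 - t"
    have m: "2 \<le> m" "m \<le> n - 1" using Suc.prems n m_def by auto
    have IH: "PP n m m permutes {1..n}" "G (PP n m m) = EE n m m"
      using Suc.IH Suc.prems m_def by auto
    have "PP n m (m + (n - m)) permutes {1..n} \<and> G (PP n m (m + (n - m))) = EE n m (m + (n - m))"
      using m IH by (intro inner) auto
    then have "PP n m n permutes {1..n} \<and> G (PP n m n) = EE n m n" using m by simp
    moreover have "n - 1 - Suc t = m - 1" using m_def by simp
    ultimately show ?case using PP_trans[OF m] EE_trans[OF m] by simp
  qed
  have "G (PP n 1 1) = EE n 1 1"
    using outer[of "n - 2"] n by (simp add: numeral_2_eq_2 Suc_diff_Suc)
  then show ?thesis using coxeter_eq[OF n] EE_final[OF n] by simp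
qed

end
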